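(* Fix the orthonormal basis $\{|0\rangle,|1\rangle\}$ of $\mathbb{C}^2$ and, for a Hermitian operator $X$ on $\mathbb{C}^2$, let $C(X):=\big\|X-\sum_{i\in\{0,1\}}\langle i|X|i\rangle\,|i\rangle\langle i|\big\|_1$ (trace norm). For every $\varepsilon>0$ there exist a finite set $\mathcal{S}$ of qubit density operators and a finite set of qubit POVMs, with $\mathcal{E}$ the set of all their POVM elements, such that: (i) $C(X)\le\varepsilon$ for every $X\in\mathcal{S}\cup\mathcal{E}$; (ii) $C(\rho)>0$ for some $\rho\in\mathcal{S}$ and $C(E)>0$ for some $E\in\mathcal{E}$; and (iii) the prepare-and-measure scenario $(\mathcal{S},\mathcal{E})$ admits no noncontextual ontological model.
   Context: A noncontextual ontological model for a quantum prepare-and-measure scenario consisting of a finite set $\mathcal{S}$ of density operators and a finite set $\mathcal{E}$ of effects (the elements of finitely many POVMs) is: a finite set $\Lambda$; a map $\rho\mapsto\mu_\rho$ from the convex hull of $\mathcal{S}$ to probability distributions on $\Lambda$ that is convex-linear (so it depends only on the operator, not on how it is decomposed as a mixture); and a map $E\mapsto\xi_E$ from the convex hull of $\mathcal{E}\cup\{0,\mathbb{1}\}$ to functions $\Lambda\to[0,1]$ that is convex-linear with $\xi_{\mathbb{1}}\equiv 1$; such that $\mathrm{Tr}(E\rho)=\sum_{\lambda\in\Lambda}\xi_E(\lambda)\mu_\rho(\lambda)$ for all $\rho\in\mathcal{S}$, $E\in\mathcal{E}$. (Equivalently, the associated GPT fragment is simplex-embeddable.) *)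

theory Defs
  imports "HOL-Analysis.Analysis"
begin

text \<open>Qubit operators: 2x2 complex matrices w.r.t. the fixed orthonormal basis
  |0>, |1> of C^2 (indices 1 and 2 of the numeral type 2).\<close>
type_synonym qop = "complex^2^2"

definition adj :: "qop \<Rightarrow> qop" where
  "adj A = (\<chi> i j. cnj (A $ j $ i))"

definition hermitian :: "qop \<Rightarrow> bool" where
  "hermitian A \<longleftrightarrow> adj A = A"

definition psd :: "qop \<Rightarrow> bool" where
  "psd A \<longleftrightarrow> hermitian A \<and>
     (\<forall>x::complex^2. 0 \<le> Re (\<Sum>i\<in>UNIV. \<Sum>j\<in>UNIV. cnj (x $ i) * A $ i $ j * x $ j))"

definition mtrace :: "qop \<Rightarrow> complex" where
  "mtrace A = (\<Sum>i\<in>UNIV. A $ i $ i)"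

definition abs_op :: "qop \<Rightarrow> qop" where
  "abs_op A = (THE P. psd P \<and> P ** P = adj A ** A)"

definition trace_norm :: "qop \<Rightarrow> real" where
  "trace_norm A = Re (mtrace (abs_op A))"

definition dephase :: "qop \<Rightarrow> qop" where
  "dephase X = (\<chi> i j. if i = j then X $ i $ i else 0)"

definition coh :: "qop \<Rightarrow> real" where
  "coh X = trace_norm (X - dephase X)"

definition density :: "qop \<Rightarrow> bool" where
  "density \<rho> \<longleftrightarrow> psd \<rho> \<and> mtrace \<rho> = 1"

definition is_povm :: "qop list \<Rightarrow> bool" where
  "is_povm M \<longleftrightarrow> (\<forall>E\<in>set M. psd E) \<and> sum_list M = mat 1"

definition povm_effects :: "qop list set \<Rightarrow> qop set" where
  "povm_effects Ms = (\<Union>M\<in>Ms. set M)"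

definition convex_linear_on :: "qop set \<Rightarrow> (qop \<Rightarrow> nat \<Rightarrow> real) \<Rightarrow> nat set \<Rightarrow> bool" where
  "convex_linear_on C f Lam \<longleftrightarrow>
     (\<forall>a\<in>C. \<forall>b\<in>C. \<forall>p::real. 0 \<le> p \<and> p \<le> 1 \<longrightarrow>
        (\<forall>l\<in>Lam. f (p *\<^sub>R a + (1 - p) *\<^sub>R b) l = p * f a l + (1 - p) * f b l))"

text \<open>Noncontextual ontological model for (S, E) with a finite ontic space
  (w.l.o.g. a finite set of naturals).\<close>
definition nc_model :: "qop set \<Rightarrow> qop set \<Rightarrow> bool" where
  "nc_model S Es \<longleftrightarrow>
    (\<exists>(Lam::nat set) (\<mu>::qop \<Rightarrow> nat \<Rightarrow> real) (\<xi>::qop \<Rightarrow> nat \<Rightarrow> real).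
       finite Lam \<and>
       (\<forall>\<rho>\<in>convex hull S. (\<forall>l\<in>Lam. 0 \<le> \<mu> \<rho> l) \<and> (\<Sum>l\<in>Lam. \<mu> \<rho> l) = 1) \<and>
       convex_linear_on (convex hull S) \<mu> Lam \<and>
       (\<forall>E\<in>convex hull (Es \<union> {0, mat 1}). \<forall>l\<in>Lam. 0 \<le> \<xi> E l \<and> \<xi> E l \<le> 1) \<and>
       convex_linear_on (convex hull (Es \<union> {0, mat 1})) \<xi> Lam \<and>
       (\<forall>l\<in>Lam. \<xi> (mat 1) l = 1) \<and>
       (\<forall>\<rho>\<in>S. \<forall>E\<in>Es. mtrace (E ** \<rho>) = complex_of_real (\<Sum>l\<in>Lam. \<xi> E l * \<mu> \<rho> l)))"

end

theory Submission
  imports Defs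
begin

definition mk :: "complex \<Rightarrow> complex \<Rightarrow> complex \<Rightarrow> complex \<Rightarrow> qop" where
  "mk a b c d = (\<chi> i j. if i = 1 then (if j = 1 then a else b) else (if j = 1 then c else d))"

lemma mk_nth[simp]: "mk a b c d $ 1 $ 1 = a" "mk a b c d $ 1 $ 2 = b"
  "mk a b c d $ 2 $ 1 = c" "mk a b c d $ 2 $ 2 = d"
  by (simp_all add: mk_def)

lemma mk_eq_iff: "A = mk a b c d \<longleftrightarrow> A$1$1 = a \<and> A$1$2 = b \<and> A$2$1 = c \<and> A$2$2 = d"
  by (auto simp: vec_eq_iff forall_2)

lemma mk_mk_eq[simp]: "mk a b c d = mk a' b' c' d' \<longleftrightarrow> a = a' \<and> b = b' \<and> c = c' \<and> d = d'"
  by (simp add: mk_eq_iff)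

lemma mk_all: "A = mk (A$1$1) (A$1$2) (A$2$1) (A$2$2)"
  by (simp add: mk_eq_iff)

lemma mk_mult[simp]: "mk a b c d ** mk a' b' c' d' = mk (a*a'+b*c') (a*b'+b*d') (c*a'+d*c') (c*b'+d*d')"
  by (simp add: mk_eq_iff matrix_matrix_mult_def sum_2)

lemma mk_add[simp]: "mk a b c d + mk a' b' c' d' = mk (a+a') (b+b') (c+c') (d+d')"
  by (simp add: mk_eq_iff)

lemma mk_diff[simp]: "mk a b c d - mk a' b' c' d' = mk (a-a') (b-b') (c-c') (d-d')"
  by (simp add: mk_eq_iff)

lemma mk_scaleR[simp]: "r *\<^sub>R mk a b c d = mk (r*\<^sub>R a) (r*\<^sub>R b) (r*\<^sub>R c) (r*\<^sub>R d)"
  by (simp add: mk_eq_iff)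

lemma mk_one: "mat 1 = mk 1 0 0 1"
  by (simp add: mk_eq_iff mat_def)

lemma mk_zero: "0 = mk 0 0 0 0"
  by (simp add: mk_eq_iff)

lemma mk_adj[simp]: "adj (mk a b c d) = mk (cnj a) (cnj c) (cnj b) (cnj d)"
  by (simp add: mk_eq_iff adj_def)

lemma mk_trace[simp]: "mtrace (mk a b c d) = a + d"
  by (simp add: mtrace_def sum_2)

lemma mk_dephase[simp]: "dephase (mk a b c d) = mk a 0 0 d"
  by (simp add: mk_eq_iff dephase_def)

lemma mk_quad: "(\<Sum>i\<in>UNIV. \<Sum>j\<in>UNIV. cnj (x $ i) * mk a b c d $ i $ j * x $ j)
   = cnj (x$1) * a * x$1 + cnj (x$1) * b * x$2 + cnj (x$2) * c * x$1 + cnj (x$2) * d * x$2"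
  by (simp add: sum_2)

lemma psd_rank1: "psd (mk (of_real (a*a)) (of_real (a*b)) (of_real (a*b)) (of_real (b*b)))"
proof -
  have "0 \<le> Re (cnj (x$1) * of_real (a*a) * x$1 + cnj (x$1) * of_real (a*b) * x$2
     + cnj (x$2) * of_real (a*b) * x$1 + cnj (x$2) * of_real (b*b) * x$2)" for x :: "complex^2"
  proof -
    have "Re (cnj (x$1) * of_real (a*a) * x$1 + cnj (x$1) * of_real (a*b) * x$2
     + cnj (x$2) * of_real (a*b) * x$1 + cnj (x$2) * of_real (b*b) * x$2)
      = (a * Re (x$1) + b * Re (x$2))^2 + (a * Im (x$1) + b * Im (x$2))^2"
      by (simp add: power2_eq_square algebra_simps)
    then show ?thesis by simp
  qed
  then show ?thesis by (simp add: psd_def hermitian_def mk_quad)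
qed

lemma psd_scalar: "c \<ge> 0 \<Longrightarrow> psd (mk (of_real c) 0 0 (of_real c))"
proof -
  assume c: "c \<ge> 0"
  have "0 \<le> Re (cnj (x$1) * of_real c * x$1 + cnj (x$1) * 0 * x$2
     + cnj (x$2) * 0 * x$1 + cnj (x$2) * of_real c * x$2)" for x :: "complex^2"
  proof -
    have "Re (cnj (x$1) * of_real c * x$1 + cnj (x$1) * 0 * x$2
     + cnj (x$2) * 0 * x$1 + cnj (x$2) * of_real c * x$2)
      = c * ((Re (x$1))^2 + (Im (x$1))^2 + (Re (x$2))^2 + (Im (x$2))^2)"
      by (simp add: power2_eq_square algebra_simps)
    then show ?thesis using c by simp
  qed
  then show ?thesis by (simp add: psd_def hermitian_def mk_quad)
qed

lemma sqrt_unique: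
  assumes c: "c \<ge> 0" and P: "psd P" and PP: "P ** P = mk (of_real (c*c)) 0 0 (of_real (c*c))"
  shows "P = mk (of_real c) 0 0 (of_real c)"
proof -
  define w where "w = P$1$1"
  define x where "x = P$1$2"
  define y where "y = P$2$1"
  define z where "z = P$2$2"
  have Pe: "P = mk w x y z" using w_def x_def y_def z_def mk_all by blast
  have herm: "mk (cnj w) (cnj y) (cnj x) (cnj z) = mk w x y z"
    using P Pe by (simp add: psd_def hermitian_def)
  then have hw: "cnj w = w" and hz: "cnj z = z" and hy: "y = cnj x" by auto
  have quad: "0 \<le> Re (cnj (v$1) * w * v$1 + cnj (v$1) * x * v$2 + cnj (v$2) * y * v$1 + cnj (v$2) * z * v$2)" for v :: "complex^2"
    using P Pe by (auto simp: psd_def mk_quad)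
  have "0 \<le> Re w" using quad[of "\<chi> i. if i = 1 then 1 else 0"] by simp
  have "0 \<le> Re z" using quad[of "\<chi> i. if i = 1 then 0 else 1"] by simp
  have wr: "Im w = 0" using hw by (simp add: complex_eq_iff)
  have zr: "Im z = 0" using hz by (simp add: complex_eq_iff)
  have e: "w*w + x*y = of_real (c*c)" "w*x + x*z = 0" "y*x + z*z = of_real (c*c)"
    using PP Pe by auto
  have x0: "x = 0"
  proof (rule ccontr)
    assume "x \<noteq> 0"
    then have "w + z = 0" using e(2) by (metis distrib_left mult.commute mult_eq_0_iff)
    then have "Re w = 0" "Re z = 0" using \<open>0 \<le> Re w\<close> \<open>0 \<le> Re z\<close> by (auto simp: complex_eq_iff)
    then have w0: "w = 0" and z0: "z = 0" using wr zr by (auto simp: complex_eq_iff)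
    have "0 \<le> Re (cnj (x) * x * (-1) + (-1) * y * x)"
      using quad[of "\<chi> i. if i = 1 then x else -1"] w0 z0 by simp
    then have "Re x = 0 \<and> Im x = 0" using hy
      by simp (smt (verit) zero_le_square mult_eq_0_iff)
    then show False using \<open>x \<noteq> 0\<close> by (simp add: complex_eq_iff)
  qed
  then have "w*w = of_real (c*c)" "z*z = of_real (c*c)" using e hy by auto
  then have "Re w * Re w = c*c" "Re z * Re z = c*c" using wr zr by (auto simp: complex_eq_iff)
  then have "Re w = c" "Re z = c" using c \<open>0 \<le> Re w\<close> \<open>0 \<le> Re z\<close>
    by (metis mult_less_cancel_left_pos linorder_neqE_linordered_idom mult_right_mono not_less order_refl less_eq_real_def mult_strict_mono)+
  then have "w = of_real c" "z = of_real c" using wr zr by (auto simp: complex_eq_iff)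
  then show ?thesis using Pe x0 hy by simp
qed

lemma coh_mk: "coh (mk p (of_real q) (of_real q) r) = 2 * \<bar>q\<bar>"
proof -
  have d: "mk p (of_real q) (of_real q) r - dephase (mk p (of_real q) (of_real q) r) = mk 0 (of_real q) (of_real q) 0"
    by simp
  have aa: "adj (mk 0 (of_real q) (of_real q) 0) ** mk 0 (of_real q) (of_real q) 0
      = mk (of_real (\<bar>q\<bar>*\<bar>q\<bar>)) 0 0 (of_real (\<bar>q\<bar>*\<bar>q\<bar>))"
    by (simp flip: of_real_mult)
  have "abs_op (mk 0 (of_real q) (of_real q) 0) = mk (of_real \<bar>q\<bar>) 0 0 (of_real \<bar>q\<bar>)"
    unfolding abs_op_def aa
    apply (rule the_equality)
    using psd_scalar[of "\<bar>q\<bar>"] apply (simp flip: of_real_mult)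
    using sqrt_unique[of "\<bar>q\<bar>"] by simp
  then show ?thesis unfolding coh_def trace_norm_def d by simp
qed

lemma key:
  fixes x a b :: "nat \<Rightarrow> nat \<Rightarrow> real" and m :: "nat \<Rightarrow> real"
  assumes fin: "finite Lam"
    and I: "\<And>i l. i \<in> {1,2,3} \<Longrightarrow> l \<in> Lam \<Longrightarrow> 0 \<le> x i l \<and> x i l \<le> 1 \<and> 0 \<le> a i l \<and> 0 \<le> b i l \<and> a i l + b i l = 2 * m l"
    and sa: "\<And>i. i \<in> {1,2,3} \<Longrightarrow> (\<Sum>l\<in>Lam. a i l) = 1"
    and sxa: "\<And>i. i \<in> {1,2,3} \<Longrightarrow> (\<Sum>l\<in>Lam. x i l * a i l) = 1"
    and sxb: "\<And>i. i \<in> {1,2,3} \<Longrightarrow> (\<Sum>l\<in>Lam. x i l * b i l) = 0"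
  shows "(\<Sum>l\<in>Lam. x 2 l * a 1 l) + (\<Sum>l\<in>Lam. x 3 l * a 1 l) - (\<Sum>l\<in>Lam. x 3 l * a 2 l) \<le> 1"
proof -
  have ae: "a i l = 2 * m l * x i l" if i: "i \<in> {1,2,3}" and l: "l \<in> Lam" for i l
  proof -
    have "(\<Sum>l\<in>Lam. (1 - x i l) * a i l) = 0"
      using sa[OF i] sxa[OF i] by (simp add: left_diff_distrib sum_subtractf)
    moreover have "\<forall>l\<in>Lam. 0 \<le> (1 - x i l) * a i l" using I[OF i] by simp
    ultimately have 1: "(1 - x i l) * a i l = 0" using sum_nonneg_eq_0_iff[OF fin, of "\<lambda>l. (1 - x i l) * a i l"] l by simp
    have "\<forall>l\<in>Lam. 0 \<le> x i l * b i l" using I[OF i] by simp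
    then have 2: "x i l * b i l = 0" using sum_nonneg_eq_0_iff[OF fin, of "\<lambda>l. x i l * b i l"] l sxb[OF i] by simp
    have "a i l = x i l * a i l" using 1 by (simp add: left_diff_distrib)
    also have "\<dots> = x i l * (2 * m l - b i l)"
    proof -
      have "a i l = 2 * m l - b i l" using I[OF i l] by linarith
      then show ?thesis by simp
    qed
    also have "\<dots> = 2 * m l * x i l" using 2 by (simp add: right_diff_distrib)
    finally show ?thesis .
  qed
  have pw: "x 2 l * a 1 l + x 3 l * a 1 l - x 3 l * a 2 l \<le> a 1 l" if l: "l \<in> Lam" for l
  proof -
    have m0: "0 \<le> m l" using I[of 1 l] l by simp
    have x: "0 \<le> x 1 l" "x 1 l \<le> 1" "0 \<le> x 2 l" "x 2 l \<le> 1" "0 \<le> x 3 l" "x 3 l \<le> 1"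
      using I[of 1 l] I[of 2 l] I[of 3 l] l by auto
    have "x 1 l * x 2 l + x 1 l * x 3 l - x 2 l * x 3 l \<le> x 1 l"
    proof -
      have "x 1 l * (x 2 l + x 3 l - 1) - x 2 l * x 3 l
          = x 1 l * (- (1 - x 2 l) * (1 - x 3 l)) + (1 - x 1 l) * (- x 2 l * x 3 l)"
        by (simp add: algebra_simps)
      also have "\<dots> \<le> 0"
      proof -
        have "0 \<le> x 1 l * ((1 - x 2 l) * (1 - x 3 l))" "0 \<le> (1 - x 1 l) * (x 2 l * x 3 l)" using x by auto
        then show ?thesis by (simp only: mult_minus_right)
      qed
      finally show ?thesis by (simp add: algebra_simps)
    qed
    then have "2 * m l * (x 1 l * x 2 l + x 1 l * x 3 l - x 2 l * x 3 l) \<le> 2 * m l * x 1 l"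
      using m0 by (intro mult_left_mono) auto
    moreover have "a 1 l = 2 * m l * x 1 l" "a 2 l = 2 * m l * x 2 l" using ae[of 1 l] ae[of 2 l] l by auto
    ultimately show ?thesis by (simp add: algebra_simps)
  qed
  have "(\<Sum>l\<in>Lam. x 2 l * a 1 l) + (\<Sum>l\<in>Lam. x 3 l * a 1 l) - (\<Sum>l\<in>Lam. x 3 l * a 2 l)
     = (\<Sum>l\<in>Lam. x 2 l * a 1 l + x 3 l * a 1 l - x 3 l * a 2 l)"
    by (simp add: sum.distrib sum_subtractf)
  also have "\<dots> \<le> (\<Sum>l\<in>Lam. a 1 l)" using pw by (rule sum_mono)
  also have "\<dots> = 1" using sa by simp
  finally show ?thesis .
qed

definition R :: "real \<Rightarrow> real \<Rightarrow> qop" where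
  "R a b = mk (of_real (a*a)) (of_real (a*b)) (of_real (a*b)) (of_real (b*b))"

lemma R_tr: "mtrace (R c d ** R e f) = of_real ((c*e + d*f)^2)"
  by (simp add: R_def complex_eq_iff power2_eq_square algebra_simps)

lemma R_psd: "psd (R a b)" unfolding R_def by (rule psd_rank1)

lemma R_density: "a*a + b*b = 1 \<Longrightarrow> density (R a b)"
  using R_psd by (simp add: density_def R_def complex_eq_iff)

lemma R_coh: "coh (R a b) = 2 * \<bar>a*b\<bar>"
  unfolding R_def by (rule coh_mk)

lemma R_compl: "a*a + b*b = 1 \<Longrightarrow> R a b + R b (-a) = mat 1"
  by (simp add: R_def mk_one complex_eq_iff)

lemma R_half: "a*a + b*b = 1 \<Longrightarrow> (1/2::real) *\<^sub>R R a b + (1 - 1/2) *\<^sub>R R b (-a) = (1/2::real) *\<^sub>R mat 1"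
  by (simp add: R_def mk_one complex_eq_iff algebra_simps)

lemma R_povm: "a*a + b*b = 1 \<Longrightarrow> is_povm [R a b, R b (-a)]"
  using R_psd R_compl by (simp add: is_povm_def)

theorem mainTheorem1:
  fixes \<epsilon> :: real
  assumes "\<epsilon> > 0"
  shows "\<exists>(S::qop set) (Ms::qop list set).
           finite S \<and> (\<forall>\<rho>\<in>S. density \<rho>) \<and>
           finite Ms \<and> (\<forall>M\<in>Ms. is_povm M) \<and>
           (\<forall>X\<in>S \<union> povm_effects Ms. coh X \<le> \<epsilon>) \<and>
           (\<exists>\<rho>\<in>S. coh \<rho> > 0) \<and> (\<exists>E\<in>povm_effects Ms. coh E > 0) \<and>
           \<not> nc_model S (povm_effects Ms)"
proof -
  define b where "b = min (\<epsilon>/2) (1/2)"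
  define a where "a = sqrt (1 - b*b)"
  have b0: "0 < b" "b \<le> 1/2" "b \<le> \<epsilon>/2" using assms by (auto simp: b_def)
  have bb: "b*b \<le> 1/4" using b0 mult_mono[of b "1/2" b "1/2"] by simp
  have aa: "a*a = 1 - b*b" unfolding a_def using bb by simp
  have ab: "a*a + b*b = 1" using aa by simp
  have a0: "0 < a" unfolding a_def using bb by simp
  have a1: "a \<le> 1" unfolding a_def using b0 by simp
  define S where "S = {R 1 0, R 0 (-1), R a b, R b (-a), R a (-b), R (-b) (-a)}"
  define Ms where "Ms = {[R 1 0, R 0 (-1)], [R a b, R b (-a)], [R a (-b), R (-b) (-a)]}"
  have eff: "povm_effects Ms = S" by (auto simp: povm_effects_def Ms_def S_def)
  have fS: "finite S" by (simp add: S_def)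
  have dS: "\<forall>\<rho>\<in>S. density \<rho>" using ab by (auto simp: S_def intro!: R_density)
  have fM: "finite Ms" by (simp add: Ms_def)
  have pM: "\<forall>M\<in>Ms. is_povm M"
  proof -
    have "is_povm [R 1 0, R 0 (-1)]" by (rule R_povm) simp
    moreover have "is_povm [R a (-b), R (-b) (-a)]" using R_povm[of a "-b"] ab by simp
    ultimately show ?thesis using R_povm[OF ab] by (auto simp: Ms_def)
  qed
  have abe: "2 * \<bar>a*b\<bar> \<le> \<epsilon>"
  proof -
    have "a*b \<le> 1*b" using a1 b0 by (intro mult_right_mono) auto
    moreover have "\<bar>a*b\<bar> = a*b" using a0 b0 by simp
    ultimately show ?thesis using b0 by linarith
  qed
  have cS: "\<forall>X\<in>S \<union> povm_effects Ms. coh X \<le> \<epsilon>"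
    unfolding eff using abe assms by (auto simp: S_def R_coh abs_mult mult.commute)
  have pos: "coh (R a b) > 0" using a0 b0 by (simp add: R_coh)
  have RS: "R a b \<in> S" by (simp add: S_def)
  have nc: "\<not> nc_model S S"
  proof
    assume "nc_model S S"
    then obtain Lam :: "nat set" and \<mu> \<xi> where fin: "finite Lam"
      and mu: "\<forall>\<rho>\<in>convex hull S. (\<forall>l\<in>Lam. 0 \<le> \<mu> \<rho> l) \<and> (\<Sum>l\<in>Lam. \<mu> \<rho> l) = 1"
      and cl: "convex_linear_on (convex hull S) \<mu> Lam"
      and xi: "\<forall>E\<in>convex hull (S \<union> {0, mat 1}). \<forall>l\<in>Lam. 0 \<le> \<xi> E l \<and> \<xi> E l \<le> 1"
      and rep: "\<forall>\<rho>\<in>S. \<forall>E\<in>S. mtrace (E ** \<rho>) = complex_of_real (\<Sum>l\<in>Lam. \<xi> E l * \<mu> \<rho> l)"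
      unfolding nc_model_def by blast
    have rep': "(\<Sum>l\<in>Lam. \<xi> E l * \<mu> \<rho> l) = Re (mtrace (E ** \<rho>))" if "\<rho> \<in> S" "E \<in> S" for \<rho> E
      using rep that by simp
    define cc :: "nat \<Rightarrow> real" where "cc = (\<lambda>i. if i = 1 then 1 else a)"
    define dd :: "nat \<Rightarrow> real" where "dd = (\<lambda>i. if i = 1 then 0 else if i = 2 then b else -b)"
    define P where "P = (\<lambda>i. R (cc i) (dd i))"
    define Q where "Q = (\<lambda>i. R (dd i) (- cc i))"
    define M where "M = (1/2::real) *\<^sub>R (mat 1 :: qop)"
    have cd1: "cc i * cc i + dd i * dd i = 1" for i using ab by (simp add: cc_def dd_def)
    have PS: "P i \<in> S" "Q i \<in> S" if "i \<in> {1,2,3}" for i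
      using that by (auto simp: P_def Q_def S_def cc_def dd_def)
    have MS: "M \<in> convex hull S"
    proof -
      have "(1/2::real) *\<^sub>R P 1 + (1 - 1/2) *\<^sub>R Q 1 \<in> convex hull S"
        using PS[of 1] by (intro convexD[OF convex_convex_hull]) (auto intro: hull_inc)
      then show ?thesis using R_half[OF cd1[of 1]] by (simp add: M_def P_def Q_def)
    qed
    have split: "\<mu> M l = 1/2 * \<mu> (P i) l + (1 - 1/2) * \<mu> (Q i) l" if "i \<in> {1,2,3}" "l \<in> Lam" for i l
    proof -
      have "\<mu> ((1/2::real) *\<^sub>R P i + (1 - 1/2) *\<^sub>R Q i) l = 1/2 * \<mu> (P i) l + (1 - 1/2) * \<mu> (Q i) l"
      proof -
        have h: "P i \<in> convex hull S" "Q i \<in> convex hull S" using PS[OF that(1)] by (auto intro: hull_inc)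
        have "0 \<le> (1/2::real) \<and> (1/2::real) \<le> 1" by simp
        then show ?thesis using cl h that(2) unfolding convex_linear_on_def by blast
      qed
      then show ?thesis using R_half[OF cd1[of i]] by (simp add: M_def P_def Q_def)
    qed
    have tr: "Re (mtrace (P i ** P i)) = 1" "Re (mtrace (P i ** Q i)) = 0" for i
      using cd1[of i] by (simp_all add: P_def Q_def R_tr power2_eq_square algebra_simps)
    have ineq: "(\<Sum>l\<in>Lam. \<xi> (P 2) l * \<mu> (P 1) l) + (\<Sum>l\<in>Lam. \<xi> (P 3) l * \<mu> (P 1) l)
        - (\<Sum>l\<in>Lam. \<xi> (P 3) l * \<mu> (P 2) l) \<le> 1"
    proof (rule key[where x = "\<lambda>i l. \<xi> (P i) l" and a = "\<lambda>i l. \<mu> (P i) l"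
          and b = "\<lambda>i l. \<mu> (Q i) l" and m = "\<lambda>l. \<mu> M l", OF fin])
      fix i l assume i: "i \<in> {1::nat,2,3}" and l: "l \<in> Lam"
      have "P i \<in> convex hull (S \<union> {0, mat 1})" using PS[OF i] by (simp add: hull_inc)
      then show "0 \<le> \<xi> (P i) l \<and> \<xi> (P i) l \<le> 1 \<and> 0 \<le> \<mu> (P i) l \<and> 0 \<le> \<mu> (Q i) l \<and>
          \<mu> (P i) l + \<mu> (Q i) l = 2 * \<mu> M l"
        using xi mu PS[OF i] l split[OF i l] by (auto simp: hull_inc)
    next
      fix i assume i: "i \<in> {1::nat,2,3}"
      show "(\<Sum>l\<in>Lam. \<mu> (P i) l) = 1" using mu PS[OF i] by (simp add: hull_inc)
      show "(\<Sum>l\<in>Lam. \<xi> (P i) l * \<mu> (P i) l) = 1" using rep' PS[OF i] tr by simp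
      show "(\<Sum>l\<in>Lam. \<xi> (P i) l * \<mu> (Q i) l) = 0" using rep' PS[OF i] tr by simp
    qed
    have v: "(\<Sum>l\<in>Lam. \<xi> (P 2) l * \<mu> (P 1) l) = a*a"
      "(\<Sum>l\<in>Lam. \<xi> (P 3) l * \<mu> (P 1) l) = a*a"
      "(\<Sum>l\<in>Lam. \<xi> (P 3) l * \<mu> (P 2) l) = (a*a - b*b)^2"
      using rep' PS[of 1] PS[of 2] PS[of 3]
      by (simp_all add: P_def cc_def dd_def R_tr power2_eq_square)
    have "a*a + a*a - (a*a - b*b)^2 = 1 + 2*(b*b)*(1 - 2*(b*b))"
      by (simp only: aa) (simp add: power2_eq_square algebra_simps)
    moreover have "0 < 2*(b*b)*(1 - 2*(b*b))" using bb b0 by simp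
    ultimately show False using ineq v by linarith
  qed
  show ?thesis
    apply (rule exI[of _ S], rule exI[of _ Ms])
    using fS dS fM pM cS pos RS nc eff by auto
qed

end
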